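(* For each $\theta\in\mathbb R$, the function $r\mapsto T(re^{i\theta})$ is strictly decreasing on $(0,1)$ and strictly increasing on $(1,\infty)$, its minimum over $r\in(0,\infty)$ is attained at $r=1$, $\lim_{r\to0}T(re^{i\theta})=\lim_{r\to\infty}T(re^{i\theta})=\infty$, and $T(re^{i\theta})=T(r^{-1}e^{i\theta})$ for all $r>0$.
   Context: Let $\mu$ be a Borel probability measure on $\mathbb T$. For $r\in(0,\infty)\setminus\{1\}$ and $\theta\in\mathbb R$ let $f(r,\theta)=\frac12\frac{1-r^2}{-\log r}\int_{-\pi}^{\pi}\frac{d\mu(e^{ix})}{|1-re^{i(\theta-x)}|^2}$, and let $f(1^-,\theta)=\lim_{r\to1^-}f(r,\theta)=\int_{-\pi}^{\pi}\frac{d\mu(e^{ix})}{|1-e^{i(\theta-x)}|^2}\in(0,\infty]$. Define $T(re^{i\theta})=1/f(r,\theta)$ for $r\neq1$ and $T(e^{i\theta})=1/f(1^-,\theta)$ (with $1/\infty=0$). *)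

theory Defs
  imports "HOL-Probability.Probability"
begin

definition circle_borel_prob :: "complex measure \<Rightarrow> bool" where
  "circle_borel_prob M \<longleftrightarrow> prob_space M \<and> sets M = sets (restrict_space borel (sphere (0::complex) 1))"

text \<open>Integrand 1/|1 - r e^{i(theta - x)}|^2 with z = e^{ix} on the circle, so that
  e^{i(theta-x)} = e^{i theta} * cnj z; value infinity where the denominator vanishes.\<close>
definition poisson_dens :: "real \<Rightarrow> real \<Rightarrow> complex \<Rightarrow> ennreal" where
  "poisson_dens r \<theta> z =
     (let d = (cmod (1 - of_real r * cis \<theta> * cnj z))\<^sup>2 in
      if d = 0 then \<infinity> else ennreal (1 / d))"

text \<open>f(r,theta) for r \<noteq> 1 and f(1^-,theta) (the integral formula) for r = 1.\<close>
definition fP :: "complex measure \<Rightarrow> real \<Rightarrow> real \<Rightarrow> ennreal" where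
  "fP M r \<theta> =
     (if r = 1 then (\<integral>\<^sup>+ z. poisson_dens 1 \<theta> z \<partial>M)
      else ennreal ((1/2) * (1 - r\<^sup>2) / (- ln r)) * (\<integral>\<^sup>+ z. poisson_dens r \<theta> z \<partial>M))"

text \<open>T(r e^{i theta}) = 1 / f, with 1/\<infinity> = 0.\<close>
definition TP :: "complex measure \<Rightarrow> real \<Rightarrow> real \<Rightarrow> real" where
  "TP M r \<theta> = enn2real (inverse (fP M r \<theta>))"

end

theory Submission
  imports Defs
begin

lemma sinh_gt_x: fixes t :: real assumes "t > 0" shows "t < sinh t"
proof -
  have "(\<lambda>x. sinh x - x) 0 < (\<lambda>x. sinh x - x) t"
  proof (rule DERIV_pos_imp_increasing_open[OF assms])
    fix x :: real assume x: "0 < x" "x < t"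
    have "cosh x \<noteq> 1" using x by simp
    hence "cosh x > 1" using cosh_real_ge_1[of x] by linarith
    thus "\<exists>y. ((\<lambda>x. sinh x - x) has_real_derivative y) (at x) \<and> y > 0"
      by (intro exI[of _ "cosh x - 1"]) (auto intro!: derivative_eq_intros)
  qed (intro continuous_intros)
  thus ?thesis by simp
qed

lemma sinh_lt_xcosh: fixes t :: real assumes "t > 0" shows "sinh t < t * cosh t"
proof -
  have "(\<lambda>x. x * cosh x - sinh x) 0 < (\<lambda>x. x * cosh x - sinh x) t"
  proof (rule DERIV_pos_imp_increasing_open[OF assms])
    fix x :: real assume x: "0 < x" "x < t"
    thus "\<exists>y. ((\<lambda>x. x * cosh x - sinh x) has_real_derivative y) (at x) \<and> y > 0"
      by (intro exI[of _ "x * sinh x"]) (auto intro!: derivative_eq_intros)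
  qed (intro continuous_intros)
  thus ?thesis by simp
qed

definition H :: "real \<Rightarrow> real \<Rightarrow> real" where
  "H c t = sinh t / (t * (cosh t - c))"

lemma H_even: "H c (-t) = H c t"
  unfolding H_def by (simp add: divide_simps)

lemma cosh_gt1: "t \<noteq> 0 \<Longrightarrow> cosh (t::real) > 1"
  using cosh_real_ge_1[of t] cosh_real_one_iff[of t] by linarith

lemma H_pos: assumes "c \<le> 1" "t \<noteq> 0" shows "H c t > 0"
proof -
  have "cosh t - c > 0" using cosh_gt1[OF assms(2)] assms by linarith
  moreover have "sinh t / t > 0" using assms(2)
    by (cases "t > 0") (auto simp: divide_simps)
  ultimately show ?thesis unfolding H_def
    by (metis divide_divide_eq_left divide_pos_pos)
qed

lemma H_decr: assumes "-1 \<le> c" "c \<le> 1" "0 < a" "a < b" shows "H c b < H c a"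
proof (rule DERIV_neg_imp_decreasing_open[OF assms(4)])
  fix t :: real assume t: "a < t" "t < b"
  hence tp: "t > 0" using assms by linarith
  have d: "cosh t - c > 0" using cosh_gt1[of t] tp assms by linarith
  define N where "N = cosh t * (t * (cosh t - c)) - sinh t * ((cosh t - c) + t * sinh t)"
  have "N = t - sinh t * cosh t - c * (t * cosh t - sinh t)"
  proof -
    have "cosh t * cosh t = sinh t * sinh t + 1" using cosh_square_eq[of t] by (simp add: power2_eq_square)
    thus ?thesis unfolding N_def by algebra
  qed
  moreover have "c * (t * cosh t - sinh t) \<ge> -(t * cosh t - sinh t)"
    using sinh_lt_xcosh[OF tp] mult_right_mono[OF assms(1), of "t * cosh t - sinh t"] by simp
  moreover have "(1 + cosh t) * (t - sinh t) < 0"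
    using sinh_gt_x[OF tp] by (intro mult_pos_neg) (auto intro: add_pos_pos)
  moreover have "(1 + cosh t) * (t - sinh t) = t - sinh t * cosh t + (t * cosh t - sinh t)"
    by (simp add: algebra_simps)
  ultimately have Nn: "N < 0" by linarith
  show "\<exists>y. (H c has_real_derivative y) (at t) \<and> y < 0"
  proof (intro exI[of _ "N / (t * (cosh t - c))^2"] conjI)
    show "(H c has_real_derivative N / (t * (cosh t - c))^2) (at t)"
      unfolding H_def
      apply (rule derivative_eq_intros refl)+
      using tp d apply simp
      unfolding N_def power2_eq_square by (simp only: mult_1_right mult_1_left diff_zero mult.commute[of "sinh t" t])
    show "N / (t * (cosh t - c))^2 < 0"
      by (intro divide_neg_pos Nn) (use tp d in simp)
  qed
next
  show "continuous_on {a..b} (H c)"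
  proof -
    have "x * (cosh x - c) \<noteq> 0" if "x \<in> {a..b}" for x
    proof -
      have "x > 0" using that assms by auto
      hence "cosh x > 1" using cosh_gt1[of x] by simp
      thus ?thesis using \<open>x > 0\<close> assms by simp
    qed
    thus ?thesis unfolding H_def by (intro continuous_intros) auto
  qed
qed

lemma H_le: assumes "-1 \<le> c" "c < 1" "t > 0" shows "H c t \<le> 1 / (1 - c)"
proof -
  define u where "u = t / 2"
  have u: "u > 0" using assms unfolding u_def by simp
  have st: "sinh t = 2 * sinh u * cosh u" using sinh_double[of u] unfolding u_def by simp
  have ct: "cosh t = 2 * (cosh u)^2 - 1" using cosh_double_cosh[of u] unfolding u_def by simp
  have tt: "t = 2 * u" unfolding u_def by simp
  have k: "cosh u > 0" by simp
  have "(1 - c) * sinh t \<le> (1 - c) * (2 * u * (cosh u)^2)"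
    unfolding st using sinh_lt_xcosh[OF u] k assms
    by (intro mult_left_mono) (auto simp: power2_eq_square)
  also have "\<dots> \<le> t * (cosh t - c)"
  proof -
    have "(1 + c) * ((cosh u)^2 - 1) \<ge> 0"
      using assms cosh_real_ge_1[of u] by (intro mult_nonneg_nonneg) (auto simp: one_le_power)
    hence "(1 - c) * (cosh u)^2 \<le> 2 * (cosh u)^2 - 1 - c" by (simp add: algebra_simps)
    from mult_left_mono[OF this, of "2*u"] u show ?thesis unfolding ct unfolding tt
      by (simp add: algebra_simps)
  qed
  finally have "(1 - c) * sinh t \<le> t * (cosh t - c)" .
  moreover have "t * (cosh t - c) > 0" using assms cosh_gt1[of t] by simp
  ultimately show ?thesis unfolding H_def using assms
    by (simp add: divide_simps mult.commute)
qed

definition Gf :: "real \<Rightarrow> real \<Rightarrow> real" where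
  "Gf r c = (1/2) * (1 - r^2) / (- ln r) / (1 - 2*r*c + r^2)"

lemma Gf_H: assumes "r > 0" "r \<noteq> 1" "-1 \<le> c" "c \<le> 1" shows "Gf r c = H c (- ln r) / 2"
proof -
  have l: "- ln r = ln (1/r)" using assms by (simp add: ln_div)
  have s: "sinh (- ln r) = (1/r - r) / 2" unfolding l using assms by (subst sinh_ln_real) auto
  have c: "cosh (- ln r) = (1/r + r) / 2" unfolding l using assms by (subst cosh_ln_real) auto
  have ln0: "ln r \<noteq> 0" using assms by simp
  have q: "1 - 2*r*c + r^2 > 0"
  proof -
    have "1 - 2*r*c + r^2 \<ge> (1 - r)^2" using assms by (simp add: power2_eq_square algebra_simps)
    moreover have "(1 - r)^2 > 0" using assms by simp
    ultimately show ?thesis by linarith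
  qed
  have e1: "(1/r + r)/2 - c = (1 - 2*r*c + r^2)/(2*r)" using assms by (simp add: field_simps power2_eq_square)
  have e2: "1/r - r = (1 - r^2)/r" using assms by (simp add: field_simps power2_eq_square)
  have gen: "(1/2)*(1-r^2)/L/q = ((1-r^2)/r/2)/(L*(q/(2*r)))/2" if "L \<noteq> 0" "q \<noteq> 0" for L q
    using that assms by (simp add: field_simps)
  show ?thesis unfolding Gf_def H_def s c e1 e2 using assms ln0 q
    by (intro gen) auto
qed


lemma K_pos: assumes "r > 0" "r \<noteq> 1" shows "(1/2) * (1 - r^2) / (- ln (r::real)) > 0"
proof (cases "r < 1")
  case True
  have "r^2 < 1" using power_strict_mono[of r 1 2] True assms by auto
  hence "1 - r^2 > 0" "- ln r > 0" using assms True by auto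
  thus ?thesis by (intro divide_pos_pos mult_pos_pos) auto
next
  case False
  hence g: "r > 1" using assms by simp
  have "1 < r^2" using power_strict_mono[of 1 r 2] g by auto
  hence "1 - r^2 < 0" "- ln r < 0" using g by auto
  hence "(1 - r^2) / (- ln r) > 0" by (intro divide_neg_neg) auto
  thus ?thesis by simp
qed

context
  fixes M :: "complex measure" and \<theta> :: real
  assumes CB: "circle_borel_prob M"
begin

lemma PS: "prob_space M" using CB unfolding circle_borel_prob_def by simp

lemma setsM: "sets M = sets (restrict_space borel (sphere (0::complex) 1))"
  using CB unfolding circle_borel_prob_def by simp

lemma spaceM: "space M = sphere 0 1"
  using sets_eq_imp_space_eq[OF setsM] by (simp add: space_restrict_space)

lemma measM: assumes "f \<in> borel_measurable borel" shows "f \<in> borel_measurable M"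
  unfolding measurable_cong_sets[OF setsM refl]
  by (rule measurable_restrict_space1[OF assms])

definition cc :: "complex \<Rightarrow> real" where "cc z = Re (cis \<theta> * cnj z)"

lemma cc_meas: "cc \<in> borel_measurable borel"
  unfolding cc_def by (intro borel_measurable_continuous_onI continuous_intros)

lemma cc_bounds: assumes "z \<in> space M" shows "-1 \<le> cc z" "cc z \<le> 1"
proof -
  have "cmod (cis \<theta> * cnj z) = 1" using assms spaceM by (simp add: norm_mult)
  hence "\<bar>cc z\<bar> \<le> 1" unfolding cc_def by (metis abs_Re_le_cmod)
  thus "-1 \<le> cc z" "cc z \<le> 1" by auto
qed

lemma norm_eq: assumes "z \<in> space M"
  shows "(cmod (1 - of_real r * cis \<theta> * cnj z))^2 = 1 - 2 * r * cc z + r^2"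
proof -
  define w where "w = cis \<theta> * cnj z"
  have "cmod w = 1" using assms spaceM unfolding w_def by (simp add: norm_mult)
  hence w1: "(Re w)^2 + (Im w)^2 = 1" using cmod_power2[of w] by simp
  have "(cmod (1 - of_real r * w))^2 = (1 - r * Re w)^2 + (r * Im w)^2"
    by (simp add: cmod_power2)
  also have "\<dots> = 1 - 2 * r * Re w + r^2 * ((Re w)^2 + (Im w)^2)"
    by (simp add: power2_eq_square algebra_simps)
  finally show ?thesis using w1 unfolding cc_def w_def by (simp add: mult.assoc)
qed

definition gg :: "real \<Rightarrow> complex \<Rightarrow> real" where "gg r z = Gf r (cc z)"

lemma gg_meas: "(\<lambda>z. gg r z) \<in> borel_measurable M"
proof -
  have "(\<lambda>c. Gf r c) \<in> borel_measurable borel" unfolding Gf_def by measurable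
  from measurable_compose[OF cc_meas this] show ?thesis unfolding gg_def by (intro measM) (simp add: o_def)
qed

lemma q_bounds: assumes "z \<in> space M" "r > 0"
  shows "(1 - r)^2 \<le> 1 - 2 * r * cc z + r^2" "1 - 2 * r * cc z + r^2 \<le> (1 + r)^2"
proof -
  have "0 \<le> 2 * r * (1 - cc z)" "0 \<le> 2 * r * (1 + cc z)" using cc_bounds[OF assms(1)] assms by auto
  thus "(1 - r)^2 \<le> 1 - 2 * r * cc z + r^2" "1 - 2 * r * cc z + r^2 \<le> (1 + r)^2"
    by (auto simp: power2_eq_square algebra_simps)
qed

lemma gg_bounds: assumes "z \<in> space M" "r > 0" "r \<noteq> 1"
  shows "(1/2) * (1 - r^2) / (- ln r) / (1 + r)^2 \<le> gg r z"
        "gg r z \<le> (1/2) * (1 - r^2) / (- ln r) / (1 - r)^2"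
proof -
  have K: "(1/2) * (1 - r^2) / (- ln r) > 0" by (rule K_pos) fact+
  have p: "(1 - r)^2 > 0" using assms by simp
  note qb = q_bounds[OF assms(1,2)]
  have qp: "1 - 2 * r * cc z + r^2 > 0" using p qb by linarith
  have p2: "(1 + r)^2 > 0" using assms by simp
  show "(1/2) * (1 - r^2) / (- ln r) / (1 + r)^2 \<le> gg r z"
    unfolding gg_def Gf_def
    by (rule divide_left_mono[OF qb(2) less_imp_le[OF K] mult_pos_pos[OF p2 qp]])
  show "gg r z \<le> (1/2) * (1 - r^2) / (- ln r) / (1 - r)^2"
    unfolding gg_def Gf_def
    by (rule divide_left_mono[OF qb(1) less_imp_le[OF K] mult_pos_pos[OF qp p]])
qed

lemma gg_pos: assumes "z \<in> space M" "r > 0" "r \<noteq> 1" shows "gg r z > 0"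
proof -
  have K: "(1/2) * (1 - r^2) / (- ln r) > 0" by (rule K_pos) fact+
  have "(1/2) * (1 - r^2) / (- ln r) / (1 + r)^2 > 0" using assms by (intro divide_pos_pos[OF K]) simp
  thus ?thesis using gg_bounds(1)[OF assms] by linarith
qed

lemma gg_H: assumes "z \<in> space M" "r > 0" "r \<noteq> 1" shows "gg r z = H (cc z) (- ln r) / 2"
  unfolding gg_def using Gf_H[OF assms(2,3) cc_bounds[OF assms(1)]] .

lemma fP_eq: assumes "r > 0" "r \<noteq> 1" shows "fP M r \<theta> = (\<integral>\<^sup>+ z. ennreal (gg r z) \<partial>M)"
proof -
  define K where "K = (1/2) * (1 - r^2) / (- ln r)"
  have K: "K > 0" unfolding K_def by (rule K_pos) fact+
  have q: "1 - 2 * r * cc z + r^2 > 0" if "z \<in> space M" for z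
    using q_bounds(1)[OF that assms(1)] assms by (smt (verit) zero_less_power2)
  have "(\<integral>\<^sup>+ z. poisson_dens r \<theta> z \<partial>M) = (\<integral>\<^sup>+ z. ennreal (1 / (1 - 2 * r * cc z + r^2)) \<partial>M)"
  proof (intro nn_integral_cong)
    fix z assume z: "z \<in> space M"
    show "poisson_dens r \<theta> z = ennreal (1 / (1 - 2 * r * cc z + r^2))"
      using q[OF z] norm_eq[OF z, of r] by (simp add: poisson_dens_def Let_def)
  qed
  also have "ennreal K * \<dots> = (\<integral>\<^sup>+ z. ennreal K * ennreal (1 / (1 - 2 * r * cc z + r^2)) \<partial>M)"
  proof (rule nn_integral_cmult[symmetric])
    have "(\<lambda>c. 1 / (1 - 2 * r * c + r^2)) \<in> borel_measurable borel" by measurable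
    from measurable_compose[OF cc_meas this]
    have "(\<lambda>z. 1 / (1 - 2 * r * cc z + r^2)) \<in> borel_measurable M" by (intro measM) (simp add: o_def)
    thus "(\<lambda>z. ennreal (1 / (1 - 2 * r * cc z + r^2))) \<in> borel_measurable M" by measurable
  qed
  also have "\<dots> = (\<integral>\<^sup>+ z. ennreal (gg r z) \<partial>M)"
  proof (intro nn_integral_cong)
    fix z assume z: "z \<in> space M"
    show "ennreal K * ennreal (1 / (1 - 2 * r * cc z + r^2)) = ennreal (gg r z)"
      using K q[OF z] by (simp add: ennreal_mult[symmetric] gg_def Gf_def K_def)
  qed
  finally show ?thesis unfolding fP_def K_def using assms by simp
qed

definition Fv :: "real \<Rightarrow> real" where "Fv r = enn2real (fP M r \<theta>)"

lemma Fv_facts: assumes "r > 0" "r \<noteq> 1"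
  shows "fP M r \<theta> = ennreal (Fv r)" "Fv r > 0" "TP M r \<theta> = 1 / Fv r"
    "Fv r \<le> (1/2) * (1 - r^2) / (- ln r) / (1 - r)^2"
proof -
  define lb where "lb = (1/2) * (1 - r^2) / (- ln r) / (1 + r)^2"
  define ub where "ub = (1/2) * (1 - r^2) / (- ln r) / (1 - r)^2"
  have K: "(1/2) * (1 - r^2) / (- ln r) > 0" by (rule K_pos) fact+
  have lbp: "lb > 0" unfolding lb_def using assms by (intro divide_pos_pos[OF K]) simp
  have e1: "emeasure M (space M) = 1" using prob_space.emeasure_space_1[OF PS] .
  have "fP M r \<theta> \<le> (\<integral>\<^sup>+ z. ennreal ub \<partial>M)"
    unfolding fP_eq[OF assms] ub_def by (intro nn_integral_mono ennreal_leI gg_bounds(2)[OF _ assms])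
  hence up: "fP M r \<theta> \<le> ennreal ub" using e1 by simp
  have "(\<integral>\<^sup>+ z. ennreal lb \<partial>M) \<le> fP M r \<theta>"
    unfolding fP_eq[OF assms] lb_def by (intro nn_integral_mono ennreal_leI gg_bounds(1)[OF _ assms])
  hence lo: "ennreal lb \<le> fP M r \<theta>" using e1 by simp
  have fin: "fP M r \<theta> \<noteq> top" using up by (metis ennreal_neq_top neq_top_trans)
  show eq: "fP M r \<theta> = ennreal (Fv r)" unfolding Fv_def using fin by (intro ennreal_enn2real[symmetric]) (simp add: less_top)
  have "lb \<le> Fv r" using lo lbp unfolding eq by (simp add: ennreal_le_iff2 Fv_def)
  thus pos: "Fv r > 0" using lbp by linarith
  have ubp: "ub > 0" unfolding ub_def using assms by (intro divide_pos_pos[OF K]) simp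
  show "Fv r \<le> ub" using up unfolding eq using ubp by (simp add: ennreal_le_iff)
  show "TP M r \<theta> = 1 / Fv r" unfolding TP_def eq using pos
    by (simp add: inverse_ennreal inverse_eq_divide)
qed

lemma Fv_less: assumes "a > 0" "a \<noteq> 1" "b > 0" "b \<noteq> 1" "\<And>z. z \<in> space M \<Longrightarrow> gg a z < gg b z"
  shows "Fv a < Fv b"
proof -
  have "fP M a \<theta> < fP M b \<theta>"
    unfolding fP_eq[OF assms(1,2)] fP_eq[OF assms(3,4)]
  proof (rule nn_integral_less)
    show "(\<lambda>z. ennreal (gg a z)) \<in> borel_measurable M" "(\<lambda>z. ennreal (gg b z)) \<in> borel_measurable M"
      using gg_meas by measurable
    show "(\<integral>\<^sup>+ z. ennreal (gg a z) \<partial>M) \<noteq> \<infinity>"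
      using Fv_facts(1)[OF assms(1,2)] fP_eq[OF assms(1,2)] by simp
    show "AE x in M. ennreal (gg a x) \<le> ennreal (gg b x)"
      using assms(5) by (intro AE_I2) (auto intro: ennreal_leI less_imp_le)
    show "\<not> (AE x in M. ennreal (gg b x) \<le> ennreal (gg a x))"
    proof
      assume A: "AE x in M. ennreal (gg b x) \<le> ennreal (gg a x)"
      have "AE x in M. False"
      proof (rule AE_mp[OF A], rule AE_I2, rule impI)
        fix x assume x: "x \<in> space M" and le: "ennreal (gg b x) \<le> ennreal (gg a x)"
        have "gg a x > 0" using gg_pos[OF x assms(1,2)] .
        hence "gg b x \<le> gg a x" using le by (simp add: ennreal_le_iff2) 
        thus False using assms(5)[OF x] by simp
      qed
      thus False using prob_space.AE_False[OF PS] by simp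
    qed
  qed
  thus ?thesis using Fv_facts(1)[OF assms(1,2)] Fv_facts(1)[OF assms(3,4)] Fv_facts(2)[OF assms(1,2)]
    by (simp add: ennreal_less_iff)
qed

lemma TP_sym: assumes "r > 0" shows "TP M r \<theta> = TP M (1 / r) \<theta>"
proof (cases "r = 1")
  case False
  have r': "1 / r > 0" "1 / r \<noteq> 1" using assms False by auto
  have "fP M r \<theta> = fP M (1 / r) \<theta>"
    unfolding fP_eq[OF assms False] fP_eq[OF r']
  proof (intro nn_integral_cong)
    fix z assume z: "z \<in> space M"
    have "- ln (1 / r) = - (- ln r)" using assms by (simp add: ln_div)
    hence "gg (1/r) z = gg r z" unfolding gg_H[OF z r'] gg_H[OF z assms False] by (simp add: H_even)
    thus "ennreal (gg r z) = ennreal (gg (1 / r) z)" by simp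
  qed
  thus ?thesis unfolding TP_def by simp
qed simp

lemma mono1: assumes "0 < r" "r < s" "s < 1" shows "TP M s \<theta> < TP M r \<theta>"
proof -
  have r: "r > 0" "r \<noteq> 1" and s: "s > 0" "s \<noteq> 1" using assms by auto
  have "Fv r < Fv s"
  proof (rule Fv_less[OF r s])
    fix z assume z: "z \<in> space M"
    have "H (cc z) (- ln r) < H (cc z) (- ln s)"
      using cc_bounds[OF z] assms by (intro H_decr) auto
    thus "gg r z < gg s z" unfolding gg_H[OF z r] gg_H[OF z s] by simp
  qed
  thus ?thesis unfolding Fv_facts(3)[OF r] Fv_facts(3)[OF s] using Fv_facts(2)[OF r]
    by (simp add: frac_less2)
qed

lemma mono2: assumes "1 < r" "r < s" shows "TP M r \<theta> < TP M s \<theta>"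
proof -
  have r: "r > 0" "r \<noteq> 1" and s: "s > 0" "s \<noteq> 1" using assms by auto
  have "Fv s < Fv r"
  proof (rule Fv_less[OF s r])
    fix z assume z: "z \<in> space M"
    have "H (cc z) (ln s) < H (cc z) (ln r)"
      using cc_bounds[OF z] assms by (intro H_decr) auto
    thus "gg s z < gg r z" unfolding gg_H[OF z r] gg_H[OF z s] by (simp add: H_even)
  qed
  thus ?thesis unfolding Fv_facts(3)[OF r] Fv_facts(3)[OF s] using Fv_facts(2)[OF s]
    by (simp add: frac_less2)
qed

lemma min1: assumes "r > 0" shows "TP M 1 \<theta> \<le> TP M r \<theta>"
proof (cases "r = 1")
  case False
  have r: "r > 0" "r \<noteq> 1" using assms False by auto
  have "fP M r \<theta> \<le> fP M 1 \<theta>"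
    unfolding fP_eq[OF r]
  proof -
    have "(\<integral>\<^sup>+ z. ennreal (gg r z) \<partial>M) \<le> (\<integral>\<^sup>+ z. poisson_dens 1 \<theta> z \<partial>M)"
    proof (intro nn_integral_mono)
      fix z assume z: "z \<in> space M"
      define c where "c = cc z"
      have d: "(cmod (1 - of_real 1 * cis \<theta> * cnj z))^2 = 2 - 2 * c"
        using norm_eq[OF z, of 1] unfolding c_def by simp
      show "ennreal (gg r z) \<le> poisson_dens 1 \<theta> z"
      proof (cases "2 - 2 * c = 0")
        case True thus ?thesis using d by (simp add: poisson_dens_def Let_def)
      next
        case F: False
        have cb: "-1 \<le> c" "c < 1" using cc_bounds[OF z] F unfolding c_def by auto
        have t: "\<bar>ln r\<bar> > 0" using r by simp
        have "H c (- ln r) = H c \<bar>ln r\<bar>" by (cases "ln r \<ge> 0") (auto simp: H_even)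
        also have "\<dots> \<le> 1 / (1 - c)" by (rule H_le[OF cb t])
        finally have "gg r z \<le> 1 / (2 - 2 * c)" unfolding gg_H[OF z r] c_def[symmetric]
          using cb by (simp add: field_simps)
        thus ?thesis using d F by (simp add: poisson_dens_def Let_def ennreal_leI)
      qed
    qed
    thus "(\<integral>\<^sup>+ z. ennreal (gg r z) \<partial>M) \<le> fP M 1 \<theta>" unfolding fP_def by simp
  qed
  hence le: "ennreal (Fv r) \<le> fP M 1 \<theta>" using Fv_facts(1)[OF r] by simp
  have pos: "Fv r > 0" by (rule Fv_facts(2)[OF r])
  show ?thesis
  proof (cases "fP M 1 \<theta>" rule: ennreal_cases)
    case (real a)
    have "Fv r \<le> a" using le real by (simp add: ennreal_le_iff)
    hence "1 / a \<le> 1 / Fv r" using pos by (simp add: frac_le)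
    moreover have "TP M 1 \<theta> = 1 / a" unfolding TP_def real using pos \<open>Fv r \<le> a\<close>
      by (simp add: inverse_ennreal inverse_eq_divide)
    ultimately show ?thesis unfolding Fv_facts(3)[OF r] by simp
  next
    case top
    thus ?thesis unfolding TP_def Fv_facts(3)[OF r] using pos by simp
  qed
qed simp

lemma lim0: "filterlim (\<lambda>r. TP M r \<theta>) at_top (at_right 0)"
proof -
  have l: "LIM r at_right 0. - ln (r::real) :> at_top"
    using filterlim_uminus_at_top[of "\<lambda>r. - ln r" "at_right 0"] ln_at_0 by simp
  have l2: "LIM r at_right 0. (2/3) * (- ln (r::real)) :> at_top"
    by (rule filterlim_tendsto_pos_mult_at_top[OF tendsto_const _ l]) simp
  show ?thesis
  proof (rule filterlim_at_top_mono[OF l2])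
    show "\<forall>\<^sub>F r in at_right 0. 2 / 3 * - ln r \<le> TP M r \<theta>"
      using eventually_at_right_real[of 0 "1/2::real", OF half_gt_zero[OF zero_less_one]]
    proof eventually_elim
      case (elim r)
      hence r: "r > 0" "r \<noteq> 1" "r < 1/2" by auto
      define L where "L = - ln r"
      have L: "L > 0" unfolding L_def using r by simp
      have "Fv r \<le> (1/2) * (1 - r^2) / L / (1 - r)^2" using Fv_facts(4)[OF r(1,2)] unfolding L_def .
      also have "\<dots> = (1/2) * ((1 + r) / (1 - r)) / L"
      proof -
        have a: "1 - r^2 = (1+r)*(1-r)" by (simp add: power2_eq_square algebra_simps)
        have b: "(1-r)^2 = (1-r)*(1-r)" by (simp add: power2_eq_square)
        have ne: "1 - r \<noteq> 0" using r by simp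
        show ?thesis unfolding a b using ne L by simp
      qed
      also have "\<dots> \<le> (1/2) * 3 / L"
      proof -
        have "(1 + r) / (1 - r) \<le> 3" using r by (simp add: field_simps)
        thus ?thesis using L by (intro divide_right_mono mult_left_mono) auto
      qed
      finally have "Fv r \<le> 3 / (2 * L)" by simp
      hence "1 / (3 / (2 * L)) \<le> 1 / Fv r" using Fv_facts(2)[OF r(1,2)] L by (simp add: field_simps)
      thus ?case unfolding Fv_facts(3)[OF r(1,2)] L_def by simp
    qed
  qed
qed

lemma limtop: "filterlim (\<lambda>r. TP M r \<theta>) at_top at_top"
proof -
  have "filterlim (\<lambda>x. TP M (inverse x) \<theta>) at_top at_top"
    by (rule filterlim_compose[OF lim0 filterlim_inverse_at_right_top])
  moreover have "\<forall>\<^sub>F x in at_top. TP M (inverse x) \<theta> = TP M x \<theta>"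
    using eventually_gt_at_top[of "0::real"]
    by eventually_elim (simp add: TP_sym[symmetric] inverse_eq_divide)
  ultimately show ?thesis by (simp add: filterlim_cong)
qed

end

theorem lemma4p3:
  fixes M :: "complex measure" and \<theta> :: real
  assumes "circle_borel_prob M"
  shows "(\<forall>r s. 0 < r \<and> r < s \<and> s < 1 \<longrightarrow> TP M s \<theta> < TP M r \<theta>)
       \<and> (\<forall>r s. 1 < r \<and> r < s \<longrightarrow> TP M r \<theta> < TP M s \<theta>)
       \<and> (\<forall>r>0. TP M 1 \<theta> \<le> TP M r \<theta>)
       \<and> filterlim (\<lambda>r. TP M r \<theta>) at_top (at_right 0)
       \<and> filterlim (\<lambda>r. TP M r \<theta>) at_top at_top
       \<and> (\<forall>r>0. TP M r \<theta> = TP M (1 / r) \<theta>)"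
  using mono1[OF assms] mono2[OF assms] min1[OF assms] lim0[OF assms] limtop[OF assms] TP_sym[OF assms]
  by blast

end
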